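(* Assume $q\neq0$. For every integer $n$, $$h_{n-2}h_{n-1}h_{n+1}h_{n+2}-h_n^4=Ed^2q^{n-2}\left[\left(p^2+q\right)h_n^2+Ed^2p^2q^{n-1}\right].$$
   Context: Let $p,q,a,b$ be complex numbers with $q\neq0$, let $d^2=p^2-4q$ and $E=b^2-abp+a^2q$. The Horadam-Lucas sequence $(h_n)$ is defined by $h_0=2b-ap$, $h_1=bp-2aq$, $h_n=ph_{n-1}-qh_{n-2}$. It is extended to all integer indices by $h_{n-2}=(ph_{n-1}-h_n)/q$. *)

theory Defs
  imports Complex_Main
begin

fun hl_pos :: "complex \<Rightarrow> complex \<Rightarrow> complex \<Rightarrow> complex \<Rightarrow> nat \<Rightarrow> complex" where
  "hl_pos p q a b 0 = 2*b - a*p"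
| "hl_pos p q a b (Suc 0) = b*p - 2*a*q"
| "hl_pos p q a b (Suc (Suc n)) = p * hl_pos p q a b (Suc n) - q * hl_pos p q a b n"

text \<open>Backward extension: hl_neg k = h_(-k), via h_(n-2) = (p h_(n-1) - h_n)/q.\<close>
fun hl_neg :: "complex \<Rightarrow> complex \<Rightarrow> complex \<Rightarrow> complex \<Rightarrow> nat \<Rightarrow> complex" where
  "hl_neg p q a b 0 = 2*b - a*p"
| "hl_neg p q a b (Suc 0) = (p * (2*b - a*p) - (b*p - 2*a*q)) / q"
| "hl_neg p q a b (Suc (Suc n)) = (p * hl_neg p q a b (Suc n) - hl_neg p q a b n) / q"

definition hl :: "complex \<Rightarrow> complex \<Rightarrow> complex \<Rightarrow> complex \<Rightarrow> int \<Rightarrow> complex" where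
  "hl p q a b n = (if 0 \<le> n then hl_pos p q a b (nat n) else hl_neg p q a b (nat (- n)))"

end

theory Submission
  imports Defs
begin

lemma hl_rec:
  assumes q: "q \<noteq> 0"
  shows "hl p q a b (n+2) = p * hl p q a b (n+1) - q * hl p q a b n"
proof (cases "n \<ge> 0")
  case True
  then have "nat (n+2) = Suc (Suc (nat n))" "nat (n+1) = Suc (nat n)" by auto
  then show ?thesis using True by (simp add: hl_def)
next
  case False
  show ?thesis
  proof (cases "n = -1")
    case True
    then show ?thesis using q by (simp add: hl_def field_simps)
  next
    case F2: False
    define k where "k = nat (-n-2)"
    have k: "n = - int k - 2" using False F2 unfolding k_def by auto
    have A: "nat (-n) = Suc (Suc k)" using k by auto
    have B: "hl p q a b (n+1) = hl_neg p q a b (Suc k)" using k by (simp add: hl_def nat_add_distrib)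
    have C: "hl p q a b (n+2) = hl_neg p q a b k"
    proof -
      have "nat (-(n+2)) = k" using k by auto
      then show ?thesis using k by (cases k) (auto simp: hl_def)
    qed
    have D: "hl p q a b n = hl_neg p q a b (Suc (Suc k))" using A False by (simp add: hl_def)
    show ?thesis unfolding B C D using q by (simp add: field_simps)
  qed
qed

lemma hl_W_step:
  assumes q: "q \<noteq> 0"
  shows "hl p q a b (n+2)^2 - p * hl p q a b (n+1) * hl p q a b (n+2) + q * hl p q a b (n+1)^2
       = q * (hl p q a b (n+1)^2 - p * hl p q a b n * hl p q a b (n+1) + q * hl p q a b n^2)"
  unfolding hl_rec[OF q] by (simp add: algebra_simps power2_eq_square)

lemma hl_W:
  assumes q: "q \<noteq> 0"
  shows "hl p q a b (n+1)^2 - p * hl p q a b n * hl p q a b (n+1) + q * hl p q a b n^2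
       = - ((b^2 - a*b*p + a^2*q) * (p^2 - 4*q)) * q powi n"
proof (induction n rule: int_induct[where k=0])
  case base
  then show ?case by (simp add: hl_def power2_eq_square algebra_simps)
next
  case (step1 i)
  have "hl p q a b (i+1+1)^2 - p * hl p q a b (i+1) * hl p q a b (i+1+1) + q * hl p q a b (i+1)^2
       = q * (hl p q a b (i+1)^2 - p * hl p q a b i * hl p q a b (i+1) + q * hl p q a b i^2)"
    using hl_W_step[OF q, of p a b i] by (simp add: add.assoc)
  also have "\<dots> = - ((b^2 - a*b*p + a^2*q) * (p^2 - 4*q)) * q powi (i+1)"
    using step1 q by (simp add: power_int_add)
  finally show ?case .
next
  case (step2 i)
  have "q * (hl p q a b i^2 - p * hl p q a b (i-1) * hl p q a b i + q * hl p q a b (i-1)^2)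
     = hl p q a b (i+1)^2 - p * hl p q a b i * hl p q a b (i+1) + q * hl p q a b i^2"
    using hl_W_step[OF q, of p a b "i-1"] by (simp add: ac_simps)
  also have "\<dots> = - ((b^2 - a*b*p + a^2*q) * (p^2 - 4*q)) * q powi i"
    using step2 by simp
  also have "\<dots> = q * (- ((b^2 - a*b*p + a^2*q) * (p^2 - 4*q)) * q powi (i-1))"
    using q by (simp add: power_int_diff)
  finally have "hl p q a b i^2 - p * hl p q a b (i-1) * hl p q a b i + q * hl p q a b (i-1)^2
     = - ((b^2 - a*b*p + a^2*q) * (p^2 - 4*q)) * q powi (i-1)"
    by (rule mult_left_cancel[OF q, THEN iffD1])
  then show ?case by simp
qed

theorem mainTheorem10:
  fixes p q a b :: complex and n :: int
  assumes "q \<noteq> 0"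
  defines "h \<equiv> hl p q a b"
      and "d2 \<equiv> p^2 - 4*q"
      and "E \<equiv> b^2 - a*b*p + a^2*q"
  shows "h (n-2) * h (n-1) * h (n+1) * h (n+2) - h n ^ 4
         = E * d2 * q powi (n-2) * ((p^2 + q) * (h n)^2 + E * d2 * p^2 * q powi (n-1))"
proof -
  note q = assms(1)
  define x where "x = h n"
  define y where "y = h (n+1)"
  define Q where "Q = q powi n"
  have r1: "y = p * x - q * h (n-1)"
    using hl_rec[OF q, of p a b "n-1"] unfolding x_def y_def h_def by (simp add: add.commute)
  have u: "h (n-1) = (p*x - y)/q" using r1 q by (simp add: field_simps)
  have r2: "x = p * h (n-1) - q * h (n-2)"
    using hl_rec[OF q, of p a b "n-2"] unfolding x_def h_def by (simp add: add.commute)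
  have v: "h (n-2) = (p*h (n-1) - x)/q" using r2 q by (simp add: field_simps)
  have z: "h (n+2) = p*y - q*x" using hl_rec[OF q, of p a b n] unfolding x_def y_def h_def by simp
  have W: "E*d2*Q = -(y^2 - p*x*y + q*x^2)"
    using hl_W[OF q, of p a b n] unfolding x_def y_def h_def E_def d2_def Q_def by simp
  have Q2: "q powi (n-2) = Q/q^2" "q powi (n-1) = Q/q" unfolding Q_def using q
    by (simp_all add: power_int_diff)
  have "E * d2 * q powi (n-2) * ((p^2 + q) * (h n)^2 + E * d2 * p^2 * q powi (n-1))
     = (E*d2*Q) * (p^2+q) * x^2 / q^2 + (E*d2*Q)^2 * p^2 / q^3"
    unfolding Q2 x_def using q by (simp add: field_simps power2_eq_square power3_eq_cube)
  also have "\<dots> = -(y^2 - p*x*y + q*x^2) * (p^2+q) * x^2 / q^2 + (y^2 - p*x*y + q*x^2)^2 * p^2 / q^3"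
    unfolding W by (simp add: algebra_simps power2_eq_square)
  also have "\<dots> = h (n-2) * h (n-1) * h (n+1) * h (n+2) - h n ^ 4"
    unfolding v u z y_def[symmetric] x_def[symmetric] using q
    by (simp add: field_simps power2_eq_square power3_eq_cube) (simp add: algebra_simps eval_nat_numeral)
  finally show ?thesis by simp
qed

end
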